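(* If $\mathbb{K}=(K,+,\times,0,1)$ is an additively positive semifield, then the inner consistency property holds for $\mathbb{K}$-relations via the Vorob'ev $\mathbb{K}$-join; that is, for any two $\mathbb{K}$-relations $R(X)$ and $S(Y)$ with $R[X\cap Y]=S[X\cap Y]$, their Vorob'ev $\mathbb{K}$-join $W$ satisfies $W[X]=R$ and $W[Y]=S$.
   Context: A semifield is a semiring ($(K,+,0)$, $(K,\times,1)$ commutative monoids, distributivity, $0$ annihilates) in which every $p\ne0$ has a multiplicative inverse $1/p$; write $p/q=p\times(1/q)$. Additively positive: $p+q=0$ implies $p=q=0$. Attributes have domains; for a finite attribute set $X$, an $X$-tuple assigns each attribute a value in its domain; $t[Y]$ is restriction. A $\mathbb{K}$-relation over $X$ is a function $R$ from $X$-tuples to $K$ with finite support $R'$; marginals $R[Y](t)=\sum_{r\in R',r[Y]=t}R(r)$. For $\mathbb{K}$-relations $R(X),S(Y)$ with $R[X\cap Y]=S[X\cap Y]$, the Vorob'ev $\mathbb{K}$-join is the $\mathbb{K}$-relation $W$ over $X\cup Y$ with $W(t)=R(t[X])\times S(t[Y])/R(t[X\cap Y])$ if $R(t[X\cap Y])\ne0$ (here $R(t[X\cap Y])$ denotes $R[X\cap Y](t[X\cap Y])$), and $W(t)=0$ otherwise. *)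

theory Defs
  imports "HOL-Library.FuncSet"
begin

class semifield = comm_semiring_1 + inverse +
  assumes sf_right_inverse: "a \<noteq> 0 \<Longrightarrow> a * inverse a = 1"
  assumes sf_divide: "a / b = a * inverse b"

definition additively_positive :: "'k::semifield itself \<Rightarrow> bool" where
  "additively_positive _ \<longleftrightarrow> (\<forall>p q :: 'k. p + q = 0 \<longrightarrow> p = 0 \<and> q = 0)"

text \<open>X-tuples over attribute domains D: extensional functions on X
  (value undefined outside X), t[Y] = restrict t Y.\<close>
definition tuples :: "('a \<Rightarrow> 'v set) \<Rightarrow> 'a set \<Rightarrow> ('a \<Rightarrow> 'v) set" where
  "tuples D X = PiE X D"

definition support :: "(('a \<Rightarrow> 'v) \<Rightarrow> 'k::zero) \<Rightarrow> ('a \<Rightarrow> 'v) set" where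
  "support R = {t. R t \<noteq> 0}"

definition is_KRel :: "('a \<Rightarrow> 'v set) \<Rightarrow> 'a set \<Rightarrow> (('a \<Rightarrow> 'v) \<Rightarrow> 'k::zero) \<Rightarrow> bool" where
  "is_KRel D X R \<longleftrightarrow> finite (support R) \<and> support R \<subseteq> tuples D X"

definition marg :: "(('a \<Rightarrow> 'v) \<Rightarrow> 'k::comm_monoid_add) \<Rightarrow> 'a set \<Rightarrow> ('a \<Rightarrow> 'v) \<Rightarrow> 'k" where
  "marg R Y t = (\<Sum>r\<in>{r \<in> support R. restrict r Y = t}. R r)"

definition vjoin :: "('a \<Rightarrow> 'v set) \<Rightarrow> 'a set \<Rightarrow> 'a set \<Rightarrow> (('a \<Rightarrow> 'v) \<Rightarrow> 'k::semifield)
    \<Rightarrow> (('a \<Rightarrow> 'v) \<Rightarrow> 'k) \<Rightarrow> ('a \<Rightarrow> 'v) \<Rightarrow> 'k" where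
  "vjoin D X Y R S t =
     (if t \<in> tuples D (X \<union> Y) \<and> marg R (X \<inter> Y) (restrict t (X \<inter> Y)) \<noteq> 0
      then R (restrict t X) * S (restrict t Y) / marg R (X \<inter> Y) (restrict t (X \<inter> Y))
      else 0)"

end

theory Submission
  imports Defs
begin

lemma sf_no_zero_div:
  fixes a b :: "'k::semifield"
  assumes "a * b = 0" shows "a = 0 \<or> b = 0"
proof (rule ccontr)
  assume h: "\<not> (a = 0 \<or> b = 0)"
  hence "b = (a * inverse a) * b" using sf_right_inverse[of a] by simp
  also have "\<dots> = inverse a * (a * b)" by (simp add: ac_simps)
  also have "\<dots> = 0" using assms by simp
  finally show False using h by simp
qed

lemma sf_inverse_nz:
  fixes a :: "'k::semifield"
  assumes "a \<noteq> 0" shows "inverse a \<noteq> 0"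
proof
  assume "inverse a = 0"
  with sf_right_inverse[OF assms] show False by simp
qed

lemma sum_pos_zero:
  fixes f :: "'b \<Rightarrow> 'k::semifield"
  assumes AP: "\<forall>p q::'k. p + q = 0 \<longrightarrow> p = 0 \<and> q = 0"
    and "finite A" and "sum f A = 0" and "x \<in> A"
  shows "f x = 0"
  using assms(2-4)
proof (induction A rule: finite_induct)
  case empty then show ?case by simp
next
  case (insert y F)
  hence "f y + sum f F = 0" by simp
  with AP have "f y = 0" "sum f F = 0" by blast+
  with insert show ?case by auto
qed

lemma main_side:
  fixes D :: "'a \<Rightarrow> 'v set" and X Y :: "'a set"
    and R S :: "('a \<Rightarrow> 'v) \<Rightarrow> 'k::semifield"
  assumes AP: "\<forall>p q::'k. p + q = 0 \<longrightarrow> p = 0 \<and> q = 0"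
    and KR: "is_KRel D X R" and KS: "is_KRel D Y S"
    and eq: "marg R (X \<inter> Y) = marg S (X \<inter> Y)"
  shows "marg (vjoin D X Y R S) X t = R t"
proof (cases "R t = 0")
  case True
  have emp: "{r \<in> support (vjoin D X Y R S). restrict r X = t} = {}"
  proof (rule ccontr)
    assume "{r \<in> support (vjoin D X Y R S). restrict r X = t} \<noteq> {}"
    then obtain r where r: "vjoin D X Y R S r \<noteq> 0" "restrict r X = t"
      unfolding support_def by auto
    then show False using True unfolding vjoin_def
      by (auto split: if_splits simp: sf_divide)
  qed
  show ?thesis using True unfolding marg_def emp by simp
next
  case False
  define W where "W = vjoin D X Y R S"
  define u where "u = restrict t (X \<inter> Y)"
  define c where "c = marg R (X \<inter> Y) u"
  have tX: "t \<in> tuples D X" using KR False unfolding is_KRel_def support_def by auto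
  have finR: "finite (support R)" using KR unfolding is_KRel_def by auto
  have cnz: "c \<noteq> 0"
  proof
    assume "c = 0"
    hence h1: "sum R {r \<in> support R. restrict r (X \<inter> Y) = u} = 0"
      unfolding c_def marg_def by simp
    have h2: "t \<in> {r \<in> support R. restrict r (X \<inter> Y) = u}"
      using False unfolding support_def u_def by auto
    have h3: "finite {r \<in> support R. restrict r (X \<inter> Y) = u}"
      using finR by simp
    have "R t = 0" by (rule sum_pos_zero[OF AP h3 h1 h2])
    with False show False by simp
  qed
  have cS: "c = marg S (X \<inter> Y) u" using eq c_def by simp
  define A where "A = {r \<in> support W. restrict r X = t}"
  define B where "B = {s \<in> support S. restrict s (X \<inter> Y) = u}"
  have Wr: "W r = R t * inverse c * S (restrict r Y)" if "r \<in> A" for r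
  proof -
    have "W r \<noteq> 0" "restrict r X = t" using that unfolding A_def support_def by auto
    have ru: "restrict r (X \<inter> Y) = u"
      using \<open>restrict r X = t\<close> unfolding u_def by auto
    have cond: "r \<in> tuples D (X \<union> Y) \<and> marg R (X \<inter> Y) (restrict r (X \<inter> Y)) \<noteq> 0"
      using \<open>W r \<noteq> 0\<close> unfolding W_def vjoin_def by (auto split: if_splits)
    have "W r = R (restrict r X) * S (restrict r Y) / marg R (X \<inter> Y) (restrict r (X \<inter> Y))"
      unfolding W_def vjoin_def by (rule if_P[OF cond])
    also have "\<dots> = R t * S (restrict r Y) * inverse c"
      using ru \<open>restrict r X = t\<close> by (simp only: c_def sf_divide)
    finally show ?thesis by (simp only: mult.assoc mult.commute[of "S (restrict r Y)" "inverse c"])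
  qed
  have bij: "bij_betw (\<lambda>r. restrict r Y) A B"
  proof (rule bij_betwI')
    fix r1 r2 assume r1: "r1 \<in> A" and r2: "r2 \<in> A"
    have e1: "r1 \<in> tuples D (X \<union> Y)" "restrict r1 X = t"
      using r1 unfolding A_def W_def support_def vjoin_def by (auto split: if_splits)
    have e2: "r2 \<in> tuples D (X \<union> Y)" "restrict r2 X = t"
      using r2 unfolding A_def W_def support_def vjoin_def by (auto split: if_splits)
    show "(restrict r1 Y = restrict r2 Y) = (r1 = r2)"
    proof
      assume h: "restrict r1 Y = restrict r2 Y"
      show "r1 = r2"
      proof
        fix a
        show "r1 a = r2 a"
        proof (cases "a \<in> X")
          case True
          then show ?thesis using e1(2) e2(2) by (metis restrict_apply')
        next
          case nX: False
          show ?thesis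
          proof (cases "a \<in> Y")
            case True then show ?thesis using h by (metis restrict_apply')
          next
            case False
            hence nXY: "a \<notin> X \<union> Y" using nX by simp
            have q1: "r1 a = undefined"
              using e1(1) nXY unfolding tuples_def by (rule PiE_arb)
            have q2: "r2 a = undefined"
              using e2(1) nXY unfolding tuples_def by (rule PiE_arb)
            show ?thesis using q1 q2 by simp
          qed
        qed
      qed
    qed simp
  next
    fix r assume r: "r \<in> A"
    have "W r \<noteq> 0" "restrict r X = t" using r unfolding A_def support_def by auto
    hence "S (restrict r Y) \<noteq> 0" using Wr[OF r] by auto
    moreover have "restrict (restrict r Y) (X \<inter> Y) = u"
      using \<open>restrict r X = t\<close> unfolding u_def by auto
    ultimately show "restrict r Y \<in> B" unfolding B_def support_def by auto
  next
    fix s assume s: "s \<in> B"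
    have sY: "s \<in> tuples D Y" using s KS unfolding B_def is_KRel_def by auto
    have sB1: "s \<in> support S" and su: "restrict s (X \<inter> Y) = u"
      using s unfolding B_def by blast+
    have Ss: "S s \<noteq> 0" using sB1 unfolding support_def by blast
    have sY': "s \<in> PiE Y D" using sY unfolding tuples_def .
    have tX': "t \<in> PiE X D" using tX unfolding tuples_def .
    define m where "m = (\<lambda>a. if a \<in> X then t a else if a \<in> Y then s a else undefined)"
    have mT: "m \<in> tuples D (X \<union> Y)" unfolding tuples_def
    proof (rule PiE_I)
      fix a assume a: "a \<in> X \<union> Y"
      show "m a \<in> D a"
      proof (cases "a \<in> X")
        case True
        then show ?thesis using tX' unfolding m_def by (simp add: PiE_mem)
      next
        case False
        then have "a \<in> Y" using a by blast
        then show ?thesis using False sY' unfolding m_def by (simp add: PiE_mem)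
      qed
    next
      fix a assume "a \<notin> X \<union> Y"
      then show "m a = undefined" unfolding m_def by simp
    qed
    have mX: "restrict m X = t"
    proof
      fix a show "restrict m X a = t a"
      proof (cases "a \<in> X")
        case True then show ?thesis unfolding m_def by simp
      next
        case False then show ?thesis using PiE_arb[OF tX' False] by simp
      qed
    qed
    have agree: "t a = s a" if "a \<in> X" "a \<in> Y" for a
    proof -
      have "restrict t (X \<inter> Y) a = restrict s (X \<inter> Y) a" using su unfolding u_def by simp
      then show ?thesis using that by simp
    qed
    have mY: "restrict m Y = s"
    proof
      fix a show "restrict m Y a = s a"
      proof (cases "a \<in> Y")
        case True then show ?thesis unfolding m_def using agree by simp
      next
        case False then show ?thesis using PiE_arb[OF sY' False] by simp
      qed
    qed
    have mu: "restrict m (X \<inter> Y) = u"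
      unfolding u_def mX[symmetric] by simp
    have cond: "m \<in> tuples D (X \<union> Y) \<and> marg R (X \<inter> Y) (restrict m (X \<inter> Y)) \<noteq> 0"
      using mT mu cnz unfolding c_def by simp
    have "W m = R (restrict m X) * S (restrict m Y) / marg R (X \<inter> Y) (restrict m (X \<inter> Y))"
      unfolding W_def vjoin_def by (rule if_P[OF cond])
    also have "\<dots> = R t * S s / c" by (simp only: mX mY mu c_def)
    also have "\<dots> \<noteq> 0"
    proof -
      have p1: "R t * S s \<noteq> 0" using False Ss sf_no_zero_div by blast
      have "R t * S s * inverse c \<noteq> 0" using p1 sf_inverse_nz[OF cnz] sf_no_zero_div by blast
      then show ?thesis by (simp add: sf_divide)
    qed
    finally have "W m \<noteq> 0" .
    then have "m \<in> A" using mX unfolding A_def support_def by blast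
    then show "\<exists>r\<in>A. s = restrict r Y" using mY by metis
  qed
  have "marg W X t = sum W A" unfolding marg_def A_def by simp
  also have "\<dots> = (\<Sum>r\<in>A. R t * inverse c * S (restrict r Y))"
    using Wr by (rule sum.cong[OF refl])
  also have "\<dots> = R t * inverse c * (\<Sum>r\<in>A. S (restrict r Y))"
    by (simp add: sum_distrib_left)
  also have "(\<Sum>r\<in>A. S (restrict r Y)) = sum S B"
    using sum.reindex_bij_betw[OF bij] .
  also have "sum S B = c" unfolding cS marg_def B_def ..
  also have "R t * inverse c * c = R t"
    using sf_right_inverse[OF cnz] by (metis mult.assoc mult.commute mult_1_right)
  finally show ?thesis unfolding W_def .
qed

theorem proposition21:
  fixes D :: "'a \<Rightarrow> 'v set" and X Y :: "'a set"
    and R S :: "('a \<Rightarrow> 'v) \<Rightarrow> 'k::semifield"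
  assumes "additively_positive TYPE('k)"
    and "finite X" and "finite Y"
    and "is_KRel D X R" and "is_KRel D Y S"
    and "marg R (X \<inter> Y) = marg S (X \<inter> Y)"
  shows "marg (vjoin D X Y R S) X = R \<and> marg (vjoin D X Y R S) Y = S"
proof -
  have AP: "\<forall>p q::'k. p + q = 0 \<longrightarrow> p = 0 \<and> q = 0"
    using assms(1) unfolding additively_positive_def by blast
  have eq2: "marg S (Y \<inter> X) = marg R (Y \<inter> X)" using assms(6) by (simp add: Int_commute)
  have sw: "vjoin D X Y R S = vjoin D Y X S R"
  proof
    fix t
    have i: "Y \<inter> X = X \<inter> Y" "Y \<union> X = X \<union> Y" by auto
    show "vjoin D X Y R S t = vjoin D Y X S R t"
      unfolding vjoin_def i assms(6) by (simp only: mult.commute)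
  qed
  have 1: "marg (vjoin D X Y R S) X = R"
    using main_side[OF AP assms(4) assms(5) assms(6)] by (rule ext)
  have 2: "marg (vjoin D Y X S R) Y = S"
    using main_side[OF AP assms(5) assms(4) eq2] by (rule ext)
  show ?thesis using 1 2 unfolding sw by (rule conjI)
qed

end
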